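(* Let $\mathbf X$ be a deterministic $d\times m$ real matrix and $\boldsymbol\varepsilon=(\varepsilon_1,\dots,\varepsilon_m)$ a vector of i.i.d. Rademacher random variables. If $\|\mathbf X\|_F^2\le1/8$, then $$\mathbb E\big[\exp\{\|\mathbf X\boldsymbol\varepsilon\|_2^2\}\big]\le\exp\{10\|\mathbf X\|_F^2\}.$$
   Context: $\|\cdot\|_F$ is the Frobenius norm; a Rademacher variable takes values $\pm1$ with probability $1/2$ each. *)

theory Defs
  imports "HOL-Probability.Probability"
begin

text \<open>A deterministic d x m real matrix is represented as X :: nat => nat => real,
  with entries X i j for i < d, j < m.  Squared Frobenius norm:\<close>
definition frob_sq :: "nat \<Rightarrow> nat \<Rightarrow> (nat \<Rightarrow> nat \<Rightarrow> real) \<Rightarrow> real" where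
  "frob_sq d m X = (\<Sum>i<d. \<Sum>j<m. (X i j)\<^sup>2)"

definition rademacher_vec :: "nat \<Rightarrow> (nat \<Rightarrow> real) pmf" where
  "rademacher_vec m = Pi_pmf {..<m} 0 (\<lambda>_. pmf_of_set {-1, 1})"

definition mat_vec_norm_sq :: "nat \<Rightarrow> nat \<Rightarrow> (nat \<Rightarrow> nat \<Rightarrow> real) \<Rightarrow> (nat \<Rightarrow> real) \<Rightarrow> real" where
  "mat_vec_norm_sq d m X e = (\<Sum>i<d. (\<Sum>j<m. X i j * e j)\<^sup>2)"

end

theory Submission
  imports Defs "HOL-Probability.Hoeffding"
begin

lemma cosh_bound:
  fixes y :: real
  shows "(exp y + exp (-y)) / 2 \<le> exp (y\<^sup>2 / 2)"
proof -
  have main: "(exp z + exp (-z)) / 2 \<le> exp (z\<^sup>2 / 2)" if z: "z \<ge> 0" for z :: real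
  proof -
    have "-(2*z) * (1/2) + ln (1 + (1/2) * (exp (2*z) - 1)) \<le> (2*z)\<^sup>2 / 8"
      using Hoeffdings_lemma_aux[of "2*z" "1/2"] z by simp
    hence "ln ((1 + exp (2*z)) / 2) \<le> z + z\<^sup>2/2"
      by (simp add: power2_eq_square field_simps)
    hence "(1 + exp (2*z)) / 2 \<le> exp (z + z\<^sup>2/2)"
      by (smt (verit) exp_gt_zero exp_le_cancel_iff exp_ln divide_pos_pos)
    hence "exp (-z) * ((1 + exp (2*z)) / 2) \<le> exp (-z) * exp (z + z\<^sup>2/2)"
      by (intro mult_left_mono) auto
    moreover have "exp (-z) * ((1 + exp (2*z)) / 2) = (exp z + exp (-z)) / 2"
      by (simp add: field_simps flip: exp_add)
    moreover have "exp (-z) * exp (z + z\<^sup>2/2) = exp (z\<^sup>2/2)"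
      by (simp flip: exp_add)
    ultimately show ?thesis by simp
  qed
  show ?thesis
  proof (cases "y \<ge> 0")
    case True then show ?thesis by (rule main)
  next
    case False
    then show ?thesis using main[of "-y"] by (simp add: add.commute)
  qed
qed

lemma expectation_pair_fin:
  fixes h :: "'a \<times> 'b \<Rightarrow> real"
  assumes "finite (set_pmf p)" "finite (set_pmf q)"
  shows "measure_pmf.expectation (pair_pmf p q) h =
         measure_pmf.expectation p (\<lambda>x. measure_pmf.expectation q (\<lambda>y. h (x, y)))"
proof -
  have "measure_pmf.expectation (pair_pmf p q) h =
        (\<Sum>z\<in>set_pmf p \<times> set_pmf q. pmf (pair_pmf p q) z *\<^sub>R h z)"
    using assms by (intro integral_measure_pmf) auto
  also have "\<dots> = (\<Sum>x\<in>set_pmf p. \<Sum>y\<in>set_pmf q. pmf p x * (pmf q y * h (x, y)))"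
    unfolding sum.cartesian_product by (intro sum.cong refl) (auto simp: pmf_pair mult.assoc)
  also have "\<dots> = (\<Sum>x\<in>set_pmf p. pmf p x *\<^sub>R measure_pmf.expectation q (\<lambda>y. h (x, y)))"
  proof (intro sum.cong refl)
    fix x
    have "measure_pmf.expectation q (\<lambda>y. h (x, y)) = (\<Sum>y\<in>set_pmf q. pmf q y *\<^sub>R h (x, y))"
      using assms by (intro integral_measure_pmf) auto
    then show "(\<Sum>y\<in>set_pmf q. pmf p x * (pmf q y * h (x, y))) =
               pmf p x *\<^sub>R measure_pmf.expectation q (\<lambda>y. h (x, y))"
      by (simp add: sum_distrib_left)
  qed
  also have "\<dots> = measure_pmf.expectation p (\<lambda>x. measure_pmf.expectation q (\<lambda>y. h (x, y)))"
    using assms by (intro integral_measure_pmf[symmetric]) auto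
  finally show ?thesis .
qed

lemma rademacher_Suc:
  "rademacher_vec (Suc m) = map_pmf (\<lambda>(y,f). f(m:=y)) (pair_pmf (pmf_of_set {-1,1}) (rademacher_vec m))"
  unfolding rademacher_vec_def lessThan_Suc by (rule Pi_pmf_insert) auto

lemma rademacher_finite: "finite (set_pmf (rademacher_vec m))"
proof (induction m)
  case 0
  then show ?case by (simp add: rademacher_vec_def)
next
  case (Suc m)
  then show ?case by (simp add: rademacher_Suc)
qed


definition nrm :: "nat \<Rightarrow> (nat \<Rightarrow> real) \<Rightarrow> real" where
  "nrm d u = (\<Sum>i<d. (u i)\<^sup>2)"

definition colS :: "nat \<Rightarrow> nat \<Rightarrow> (nat \<Rightarrow> nat \<Rightarrow> real) \<Rightarrow> real" where
  "colS d m X = (\<Sum>j<m. \<Sum>i<d. (X i j)\<^sup>2)"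

lemma nrm_nonneg: "nrm d u \<ge> 0"
  unfolding nrm_def by (intro sum_nonneg) auto

lemma colS_nonneg: "colS d m X \<ge> 0"
  unfolding colS_def by (intro sum_nonneg) auto

lemma step_pt:
  fixes c :: real and W x :: "nat \<Rightarrow> real"
  assumes c: "c > 0"
  shows "(exp (c * nrm d (\<lambda>i. W i + x i * (-1))) + exp (c * nrm d (\<lambda>i. W i + x i * 1))) / 2
         \<le> exp (c * nrm d x) * exp (c * (1 + 2 * c * nrm d x) * nrm d W)"
proof -
  define s where "s = (\<Sum>i<d. W i * x i)"
  define N where "N = nrm d W"
  define a where "a = nrm d x"
  have s2: "s\<^sup>2 \<le> N * a"
    unfolding s_def N_def a_def nrm_def by (rule Cauchy_Schwarz_ineq_sum)
  have e1: "nrm d (\<lambda>i. W i + x i * (-1)) = N - 2 * s + a"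
    unfolding N_def a_def s_def nrm_def
    by (simp add: power2_eq_square algebra_simps sum.distrib sum_subtractf sum_distrib_left)
  have e2: "nrm d (\<lambda>i. W i + x i * 1) = N + 2 * s + a"
    unfolding N_def a_def s_def nrm_def
    by (simp add: power2_eq_square algebra_simps sum.distrib sum_distrib_left)
  have "(exp (c * (N - 2 * s + a)) + exp (c * (N + 2 * s + a))) / 2
        = exp (c * N + c * a) * ((exp (2 * c * s) + exp (-(2 * c * s))) / 2)"
    by (simp add: field_simps flip: exp_add)
  also have "\<dots> \<le> exp (c * N + c * a) * exp ((2 * c * s)\<^sup>2 / 2)"
    by (intro mult_left_mono cosh_bound) auto
  also have "\<dots> = exp (c * N + c * a + 2 * c\<^sup>2 * s\<^sup>2)"
    by (simp add: power_mult_distrib flip: exp_add)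
  also have "\<dots> \<le> exp (c * N + c * a + 2 * c\<^sup>2 * (N * a))"
    using s2 c by (intro iffD2[OF exp_le_cancel_iff] add_left_mono mult_left_mono) auto
  also have "\<dots> = exp (c * a) * exp (c * (1 + 2 * c * a) * N)"
    by (simp add: algebra_simps power2_eq_square flip: exp_add)
  finally show ?thesis using e1 e2 unfolding a_def N_def by simp
qed

lemma sum_upd_Suc:
  "(\<Sum>j<Suc m. X i j * (f(m:=y)) j) = (\<Sum>j<m. X i j * f j) + X i m * y"
  by (simp add: lessThan_Suc add.commute)


lemma arith_step:
  fixes c a S N :: real
  assumes c: "c > 0" and a: "a \<ge> 0" and S: "S \<ge> 0" and N: "N \<ge> 0"
    and T: "2 * c * (S + a) < 1"
  shows "2 * (c * (1 + 2 * c * a)) * S < 1"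
    and "c * a + (c * (1 + 2 * c * a)) / (1 - 2 * (c * (1 + 2 * c * a)) * S) * (N + S)
         \<le> c / (1 - 2 * c * (S + a)) * (N + (S + a))"
proof -
  define c' where "c' = c * (1 + 2 * c * a)"
  define T where "T = 1 - 2 * c * (S + a)"
  have Tpos: "T > 0" using T unfolding T_def by simp
  have T1: "T \<le> 1" unfolding T_def using c a S by simp
  have e: "2 * c * (S + a) = 2 * c * S + 2 * c * a" by (simp add: algebra_simps)
  have "2 * c * S \<ge> 0" "2 * c * a \<ge> 0" using c S a by simp_all
  hence ca: "2 * c * a \<le> 1" and cS: "2 * c * S \<le> 1" using T e by linarith+
  have "4 * c\<^sup>2 * a * S \<le> 2 * c * a"
  proof -
    have "4 * c\<^sup>2 * a * S = (2 * c * a) * (2 * c * S)" by (simp add: power2_eq_square)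
    also have "\<dots> \<le> (2 * c * a) * 1" using cS c a by (intro mult_left_mono) auto
    finally show ?thesis by simp
  qed
  hence D: "1 - 2 * c' * S \<ge> T"
    unfolding c'_def T_def by (simp add: algebra_simps power2_eq_square)
  thus "2 * (c * (1 + 2 * c * a)) * S < 1" using Tpos unfolding c'_def by simp
  have Dpos: "1 - 2 * c' * S > 0" using D Tpos by simp
  have key: "c' * T \<le> c * (1 - 2 * c' * S)"
  proof -
    have "c * (1 - 2 * c' * S) - c' * T = c - c' + 2 * c * c' * a"
      unfolding T_def by (simp add: algebra_simps)
    also have "\<dots> = 4 * c^3 * a\<^sup>2"
      unfolding c'_def by (simp add: algebra_simps power2_eq_square power3_eq_cube)
    also have "\<dots> \<ge> 0" using c by simp
    finally show ?thesis by simp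
  qed
  have psi: "c' / (1 - 2 * c' * S) \<le> c / T"
    using key Dpos Tpos by (simp add: divide_simps mult.commute)
  have c'pos: "c' \<ge> 0" unfolding c'_def using c a by simp
  have "c * a \<le> c * a / T"
    using T1 Tpos c a by (simp add: divide_simps mult_left_le)
  moreover have "c' / (1 - 2 * c' * S) * (N + S) \<le> c / T * (N + S)"
    using psi N S by (intro mult_right_mono) auto
  ultimately have "c * a + c' / (1 - 2 * c' * S) * (N + S) \<le> c * a / T + c / T * (N + S)"
    by simp
  also have "\<dots> = c / T * (N + (S + a))" by (simp add: add_divide_distrib[symmetric] algebra_simps)
  finally show "c * a + (c * (1 + 2 * c * a)) / (1 - 2 * (c * (1 + 2 * c * a)) * S) * (N + S)
         \<le> c / (1 - 2 * c * (S + a)) * (N + (S + a))"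
    unfolding c'_def T_def by simp
qed


lemma main_bound:
  fixes X :: "nat \<Rightarrow> nat \<Rightarrow> real"
  shows "\<forall>u c. c > 0 \<longrightarrow> 2 * c * colS d m X < 1 \<longrightarrow>
    measure_pmf.expectation (rademacher_vec m)
      (\<lambda>e. exp (c * nrm d (\<lambda>i. u i + (\<Sum>j<m. X i j * e j))))
    \<le> exp (c / (1 - 2 * c * colS d m X) * (nrm d u + colS d m X))"
proof (induction m)
  case 0
  show ?case by (simp add: rademacher_vec_def colS_def)
next
  case (Suc m)
  show ?case
  proof (intro allI impI)
    fix u :: "nat \<Rightarrow> real" and c :: real
    assume c: "c > 0" and T: "2 * c * colS d (Suc m) X < 1"
    define S where "S = colS d m X"
    define x where "x = (\<lambda>i. X i m)"
    define a where "a = nrm d x"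
    define c' where "c' = c * (1 + 2 * c * a)"
    define V where "V = (\<lambda>f i. u i + (\<Sum>j<m. X i j * f j))"
    define G where "G = (\<lambda>f y. exp (c * nrm d (\<lambda>i. V f i + x i * y)))"
    have SS: "colS d (Suc m) X = S + a"
      unfolding S_def a_def colS_def nrm_def x_def by simp
    have a0: "a \<ge> 0" unfolding a_def by (rule nrm_nonneg)
    have S0: "S \<ge> 0" unfolding S_def by (rule colS_nonneg)
    have T': "2 * c * (S + a) < 1" using T SS by simp
    have c'0: "c' > 0" unfolding c'_def using c a0 by (simp add: add_pos_nonneg)
    have T'': "2 * c' * S < 1" using arith_step(1)[OF c a0 S0 nrm_nonneg T'] unfolding c'_def .
    have fin: "finite (set_pmf (rademacher_vec m))" by (rule rademacher_finite)
    have fin2: "finite (set_pmf (pmf_of_set {-1, 1::real}))" by simp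
    have "measure_pmf.expectation (rademacher_vec (Suc m))
            (\<lambda>e. exp (c * nrm d (\<lambda>i. u i + (\<Sum>j<Suc m. X i j * e j))))
          = measure_pmf.expectation (pair_pmf (pmf_of_set {-1,1}) (rademacher_vec m))
              (\<lambda>p. G (snd p) (fst p))"
      unfolding rademacher_Suc G_def V_def x_def
      by (simp add: sum_upd_Suc case_prod_beta add.assoc)
    also have "\<dots> = measure_pmf.expectation (pmf_of_set {-1,1})
                 (\<lambda>y. measure_pmf.expectation (rademacher_vec m) (\<lambda>f. G f y))"
      by (subst expectation_pair_fin[OF fin2 fin]) simp
    also have "\<dots> = (measure_pmf.expectation (rademacher_vec m) (\<lambda>f. G f (-1))
                    + measure_pmf.expectation (rademacher_vec m) (\<lambda>f. G f 1)) / 2"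
      by (subst integral_pmf_of_set) auto
    also have "\<dots> = measure_pmf.expectation (rademacher_vec m) (\<lambda>f. (G f (-1) + G f 1) / 2)"
    proof -
      have "measure_pmf.expectation (rademacher_vec m) (\<lambda>f. G f (-1) + G f 1)
          = measure_pmf.expectation (rademacher_vec m) (\<lambda>f. G f (-1))
            + measure_pmf.expectation (rademacher_vec m) (\<lambda>f. G f 1)"
        by (rule Bochner_Integration.integral_add) (rule integrable_measure_pmf_finite[OF fin])+
      thus ?thesis by simp
    qed
    also have "\<dots> \<le> measure_pmf.expectation (rademacher_vec m)
                      (\<lambda>f. exp (c * a) * exp (c' * nrm d (V f)))"
    proof (rule integral_mono)
      fix f
      show "(G f (-1) + G f 1) / 2 \<le> exp (c * a) * exp (c' * nrm d (V f))"
        unfolding G_def a_def c'_def by (rule step_pt[OF c])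
    qed (rule integrable_measure_pmf_finite[OF fin])+
    also have "\<dots> = exp (c * a) * measure_pmf.expectation (rademacher_vec m)
                      (\<lambda>f. exp (c' * nrm d (V f)))"
      by simp
    also have "\<dots> \<le> exp (c * a) * exp (c' / (1 - 2 * c' * S) * (nrm d u + S))"
      using Suc.IH c'0 T'' unfolding V_def S_def by (intro mult_left_mono) auto
    also have "\<dots> = exp (c * a + c' / (1 - 2 * c' * S) * (nrm d u + S))"
      by (simp flip: exp_add)
    also have "\<dots> \<le> exp (c / (1 - 2 * c * (S + a)) * (nrm d u + (S + a)))"
      using arith_step(2)[OF c a0 S0 nrm_nonneg T'] unfolding c'_def by simp
    finally show "measure_pmf.expectation (rademacher_vec (Suc m))
            (\<lambda>e. exp (c * nrm d (\<lambda>i. u i + (\<Sum>j<Suc m. X i j * e j))))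
          \<le> exp (c / (1 - 2 * c * colS d (Suc m) X) * (nrm d u + colS d (Suc m) X))"
      using SS by simp
  qed
qed

theorem lemma9:
  fixes d m :: nat and X :: "nat \<Rightarrow> nat \<Rightarrow> real"
  assumes "frob_sq d m X \<le> 1/8"
  shows "measure_pmf.expectation (rademacher_vec m) (\<lambda>e. exp (mat_vec_norm_sq d m X e))
           \<le> exp (10 * frob_sq d m X)"
proof -
  define F where "F = frob_sq d m X"
  have F: "colS d m X = F" unfolding colS_def F_def frob_sq_def by (rule sum.swap)
  have F0: "F \<ge> 0" using colS_nonneg F by metis
  have F8: "F \<le> 1/8" using assms F_def by simp
  have "measure_pmf.expectation (rademacher_vec m) (\<lambda>e. exp (mat_vec_norm_sq d m X e))
        = measure_pmf.expectation (rademacher_vec m)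
            (\<lambda>e. exp (1 * nrm d (\<lambda>i. (\<lambda>_. 0) i + (\<Sum>j<m. X i j * e j))))"
    by (simp add: mat_vec_norm_sq_def nrm_def)
  also have "\<dots> \<le> exp (1 / (1 - 2 * 1 * F) * (nrm d (\<lambda>_. 0) + F))"
    using main_bound[of d m X, rule_format, where u="\<lambda>_. 0" and c=1] F F8 by simp
  also have "\<dots> \<le> exp (10 * F)"
  proof -
    have "1 / (1 - 2 * F) * F \<le> 10 * F"
    proof -
      have h: "F * 1 \<le> F * (10 * (1 - 2 * F))" using F0 F8 by (intro mult_left_mono) auto
      have "1 - 2 * F > 0" using F8 by simp
      thus ?thesis using h by (simp add: divide_simps algebra_simps)
    qed
    thus ?thesis by (simp add: nrm_def)
  qed
  finally show ?thesis unfolding F_def .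
qed

end
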